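(* Let $G\subset\mathrm{SL}(2,\mathbb{C})$ be a finite subgroup and let $P\in\mathbb{C}[x,y]$. The following are equivalent: (1) $P(0,0)=0$ and $g\cdot P=P$ for all $g\in G$; (2) there exists an endomorphism $F=(f_1,f_2)$ of $\mathbb{A}^2$ with $g\cdot F=F$ for all $g\in G$ and $f_1y-f_2x=P$.
   Context: $\mathrm{SL}(2,\mathbb{C})$ acts on $\mathbb{C}[x,y]$ by $g\cdot P=P\circ g^{-1}$ and on $\mathrm{End}(\mathbb{A}^2)=\mathbb{C}[x,y]\times\mathbb{C}[x,y]$ by $g\cdot F=g\circ F\circ g^{-1}$, where $g$ is viewed as a linear automorphism of $\mathbb{A}^2$ and $F=(f_1,f_2)$ means $F(x,y)=(f_1(x,y),f_2(x,y))$. *)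

theory Defs
  imports "HOL-Analysis.Analysis" "HOL-Computational_Algebra.Polynomial"
begin

text \<open>C[x,y] is represented as C[x][y]: a polynomial in y whose coefficients are
polynomials in x.\<close>
type_synonym bipoly = "complex poly poly"

definition bconst :: "complex \<Rightarrow> bipoly" where "bconst c = [:[:c:]:]"
definition bX :: bipoly where "bX = [:[:0, 1:]:]"
definition bY :: bipoly where "bY = [:0, 1:]"

definition beval :: "bipoly \<Rightarrow> complex \<Rightarrow> complex \<Rightarrow> complex" where
  "beval P a b = poly (poly P [:b:]) a"

definition bsubst :: "bipoly \<Rightarrow> bipoly \<Rightarrow> bipoly \<Rightarrow> bipoly" where
  "bsubst P u v = poly (map_poly (\<lambda>q. poly (map_poly bconst q) u) P) v"

definition lin_comp :: "bipoly \<Rightarrow> complex^2^2 \<Rightarrow> bipoly" where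
  "lin_comp P h = bsubst P (bconst (h$1$1) * bX + bconst (h$1$2) * bY)
                           (bconst (h$2$1) * bX + bconst (h$2$2) * bY)"

definition act_poly :: "complex^2^2 \<Rightarrow> bipoly \<Rightarrow> bipoly" where
  "act_poly g P = lin_comp P (matrix_inv g)"

text \<open>g \<cdot> F = g \<circ> F \<circ> g^{-1}, F = (f1, f2).\<close>
definition act_end :: "complex^2^2 \<Rightarrow> bipoly \<times> bipoly \<Rightarrow> bipoly \<times> bipoly" where
  "act_end g F = (let h = matrix_inv g; f1 = lin_comp (fst F) h; f2 = lin_comp (snd F) h in
     (bconst (g$1$1) * f1 + bconst (g$1$2) * f2, bconst (g$2$1) * f1 + bconst (g$2$2) * f2))"

definition SL2 :: "(complex^2^2) set" where "SL2 = {g. det g = 1}"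

definition finite_subgroup_SL2 :: "(complex^2^2) set \<Rightarrow> bool" where
  "finite_subgroup_SL2 G \<longleftrightarrow> finite G \<and> G \<subseteq> SL2 \<and> mat 1 \<in> G \<and>
     (\<forall>g\<in>G. \<forall>h\<in>G. g ** h \<in> G) \<and> (\<forall>g\<in>G. matrix_inv g \<in> G)"

end

theory Submission
  imports Defs
begin

lemma beval_add[simp]: "beval (P + Q) a b = beval P a b + beval Q a b"
  by (simp add: beval_def)
lemma beval_diff[simp]: "beval (P - Q) a b = beval P a b - beval Q a b"
  by (simp add: beval_def)
lemma beval_mult[simp]: "beval (P * Q) a b = beval P a b * beval Q a b"
  by (simp add: beval_def)
lemma beval_minus[simp]: "beval (- P) a b = - beval P a b"
  by (simp add: beval_def)
lemma beval_zero[simp]: "beval 0 a b = 0"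
  by (simp add: beval_def)
lemma beval_sum[simp]: "beval (sum f S) a b = (\<Sum>i\<in>S. beval (f i) a b)"
  by (induction S rule: infinite_finite_induct) auto
lemma beval_bconst[simp]: "beval (bconst c) a b = c"
  by (simp add: beval_def bconst_def)
lemma beval_bX[simp]: "beval bX a b = a"
  by (simp add: beval_def bX_def)
lemma beval_bY[simp]: "beval bY a b = b"
  by (simp add: beval_def bY_def)

lemma beval_inj:
  assumes "\<And>a b. beval P a b = beval Q a b" shows "P = Q"
proof -
  define R where "R = P - Q"
  have 1: "poly R [:b:] = 0" for b
    using assms poly_all_0_iff_0[of "poly R [:b:]"] by (auto simp: R_def beval_def)
  have "R = 0"
  proof (rule ccontr)
    assume "R \<noteq> 0"
    then have "finite {x. poly R x = 0}" by (rule poly_roots_finite)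
    moreover have "range (\<lambda>b. [:b:]) \<subseteq> {x. poly R x = 0}" using 1 by auto
    moreover have "infinite (range (\<lambda>b::complex. [:b:]))"
    proof
      assume "finite (range (\<lambda>b::complex. [:b:]))"
      then have "finite (UNIV::complex set)" by (rule finite_imageD) (auto simp: inj_on_def)
      then show False using infinite_UNIV_char_0 by blast
    qed
    ultimately show False using finite_subset by blast
  qed
  then show ?thesis by (simp add: R_def)
qed

lemma bconst_0[simp]: "bconst 0 = 0" by (simp add: bconst_def)

lemma beval_inner:
  "beval (poly (map_poly bconst c) u) a b = poly c (beval u a b)"
proof (induction c)
  case 0 then show ?case by simp
next
  case (pCons d c) then show ?case
    by (simp add: map_poly_pCons)
qed

lemma beval_bsubst:
  "beval (bsubst P u v) a b = beval P (beval u a b) (beval v a b)"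
proof (induction P)
  case 0 then show ?case by (simp add: bsubst_def)
next
  case (pCons c p)
  have z: "(\<lambda>q. poly (map_poly bconst q) u) 0 = 0" by simp
  have "bsubst (pCons c p) u v = poly (map_poly bconst c) u + v * bsubst p u v"
    by (simp add: bsubst_def map_poly_pCons[where f="\<lambda>q. poly (map_poly bconst q) u", OF z])
  then show ?case using pCons
    by (simp add: beval_inner) (simp add: beval_def)
qed

definition ev :: "bipoly \<Rightarrow> complex^2 \<Rightarrow> complex" where
  "ev P v = beval P (v$1) (v$2)"
definition evF :: "bipoly \<times> bipoly \<Rightarrow> complex^2 \<Rightarrow> complex^2" where
  "evF F v = (\<chi> i. if i = 1 then ev (fst F) v else ev (snd F) v)"
definition D :: "complex^2 \<Rightarrow> complex^2 \<Rightarrow> complex" where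
  "D w u = w$1 * u$2 - w$2 * u$1"

lemma ev_inj: assumes "\<And>v. ev P v = ev Q v" shows "P = Q"
proof (rule beval_inj)
  fix a b
  show "beval P a b = beval Q a b"
    using assms[of "\<chi> i. if i = 1 then a else b"] by (simp add: ev_def)
qed

lemma evF_1[simp]: "evF F v $ 1 = ev (fst F) v" by (simp add: evF_def)
lemma evF_2[simp]: "evF F v $ 2 = ev (snd F) v" by (simp add: evF_def)

lemma evF_inj: assumes "\<And>v. evF F v = evF F' v" shows "F = F'"
proof -
  have "ev (fst F) v = ev (fst F') v" "ev (snd F) v = ev (snd F') v" for v
    using assms[of v] by (metis evF_1, metis evF_2)
  then have "fst F = fst F'" "snd F = snd F'" by (auto intro: ev_inj)
  then show ?thesis by (simp add: prod_eq_iff)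
qed

lemma mv1: "((A::complex^2^2) *v v)$1 = A$1$1 * v$1 + A$1$2 * v$2"
  by (simp add: matrix_vector_mult_def sum_2)
lemma mv2: "((A::complex^2^2) *v v)$2 = A$2$1 * v$1 + A$2$2 * v$2"
  by (simp add: matrix_vector_mult_def sum_2)

lemma ev_lin_comp: "ev (lin_comp P h) v = ev P (h *v v)"
  by (simp add: ev_def lin_comp_def beval_bsubst mv1 mv2)

lemma evF_act_end: "evF (act_end g F) v = g *v evF F (matrix_inv g *v v)"
  by (simp add: vec_eq_iff forall_2 mv1 mv2 act_end_def Let_def ev_def lin_comp_def beval_bsubst)

lemma D_mult: "D (A *v w) (A *v u) = det A * D w u"
  by (simp add: D_def mv1 mv2 det_2 algebra_simps)

lemma ev_PF: "ev (f1 * bY - f2 * bX) v = D (evF (f1, f2) v) v"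
  by (simp add: ev_def D_def)

lemma mv_sum: "A *v sum f S = (\<Sum>i\<in>S. A *v f i)"
  by (induction S rule: infinite_finite_induct) (auto simp: matrix_vector_right_distrib)

lemma mv_smult: "(A::complex^2^2) *v (c *s w) = c *s (A *v w)"
  by (simp add: vec_eq_iff forall_2 mv1 mv2 algebra_simps)

lemma D_sum: "D (sum f S) u = (\<Sum>i\<in>S. D (f i) u)"
  by (induction S rule: infinite_finite_induct) (auto simp: D_def algebra_simps)

lemma D_smult: "D (c *s w) u = c * D w u"
  by (simp add: D_def algebra_simps)

lemma inv_props:
  fixes g :: "complex^2^2" assumes "det g = 1"
  shows "g ** matrix_inv g = mat 1" "matrix_inv g ** g = mat 1"
proof -
  have "invertible g" using assms invertible_det_nz by force
  then have "\<exists>A'. g ** A' = mat 1 \<and> A' ** g = mat 1" by (simp add: invertible_def)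
  then have "g ** matrix_inv g = mat 1 \<and> matrix_inv g ** g = mat 1"
    unfolding matrix_inv_def by (rule someI_ex)
  then show "g ** matrix_inv g = mat 1" "matrix_inv g ** g = mat 1" by auto
qed

lemma inv_mult:
  fixes g k :: "complex^2^2" assumes "det g = 1" "det k = 1"
  shows "matrix_inv (k ** g) = matrix_inv g ** matrix_inv k"
proof -
  have dk: "det (k ** g) = 1" using assms by (simp add: det_mul)
  have "(k ** g) ** (matrix_inv g ** matrix_inv k) = mat 1"
    by (metis assms inv_props(1) matrix_mul_assoc matrix_mul_rid)
  moreover have "matrix_inv (k ** g) ** ((k ** g) ** (matrix_inv g ** matrix_inv k))
     = matrix_inv g ** matrix_inv k"
    using matrix_mul_assoc[of "matrix_inv (k ** g)" "k ** g" "matrix_inv g ** matrix_inv k"]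
    by (simp add: inv_props(2)[OF dk])
  ultimately show ?thesis by simp
qed

lemma decomp:
  assumes "beval P 0 0 = 0" shows "\<exists>A B. P = bX * A + bY * B"
proof -
  obtain p0 Q where P: "P = pCons p0 Q" by (cases P) auto
  have "poly p0 0 = 0" using assms by (simp add: P beval_def)
  then have "[:0, 1:] dvd p0" by (simp add: poly_eq_0_iff_dvd)
  then obtain r where r: "p0 = [:0, 1:] * r" by (auto elim: dvdE)
  have "P = bX * [:r:] + bY * Q"
    by (simp add: P r bX_def bY_def)
  then show ?thesis by blast
qed

theorem mainTheorem10:
  fixes G :: "(complex^2^2) set" and P :: bipoly
  assumes "finite_subgroup_SL2 G"
  shows "(beval P 0 0 = 0 \<and> (\<forall>g\<in>G. act_poly g P = P)) \<longleftrightarrow>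
         (\<exists>f1 f2. (\<forall>g\<in>G. act_end g (f1, f2) = (f1, f2)) \<and> f1 * bY - f2 * bX = P)"
proof -
  have finG: "finite G" and SL: "\<And>g. g \<in> G \<Longrightarrow> det g = 1" and oneG: "mat 1 \<in> G"
    and mulG: "\<And>g h. g \<in> G \<Longrightarrow> h \<in> G \<Longrightarrow> g ** h \<in> G"
    and invG: "\<And>g. g \<in> G \<Longrightarrow> matrix_inv g \<in> G"
    using assms by (auto simp: finite_subgroup_SL2_def SL2_def)
  show ?thesis
  proof
    assume H: "beval P 0 0 = 0 \<and> (\<forall>g\<in>G. act_poly g P = P)"
    then obtain A B where AB: "P = bX * A + bY * B" using decomp by blast
    define F0 where "F0 = (B, - A)"
    have PF0: "ev P v = D (evF F0 v) v" for v
      using ev_PF[of B "-A" v] by (simp add: F0_def AB algebra_simps)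
    define n where "n = card G"
    have n0: "n \<noteq> 0" using finG oneG by (auto simp: n_def)
    define c :: complex where "c = 1 / of_nat n"
    define f1 where "f1 = (\<Sum>g\<in>G. bconst c * fst (act_end g F0))"
    define f2 where "f2 = (\<Sum>g\<in>G. bconst c * snd (act_end g F0))"
    have evF12: "evF (f1, f2) v = c *s (\<Sum>g\<in>G. g *v evF F0 (matrix_inv g *v v))" for v
    proof -
      have "evF (f1, f2) v = c *s (\<Sum>g\<in>G. evF (act_end g F0) v)"
        by (simp add: vec_eq_iff forall_2 f1_def f2_def ev_def sum_distrib_left)
      then show ?thesis by (simp add: evF_act_end)
    qed
    have inv: "act_end k (f1, f2) = (f1, f2)" if k: "k \<in> G" for k
    proof (rule evF_inj)
      fix v
      have "evF (act_end k (f1, f2)) v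
          = c *s (\<Sum>g\<in>G. k *v (g *v evF F0 (matrix_inv g *v (matrix_inv k *v v))))"
        by (simp add: evF_act_end evF12 mv_sum mv_smult)
      also have "\<dots> = c *s (\<Sum>g\<in>G. (k ** g) *v evF F0 (matrix_inv (k ** g) *v v))"
        by (intro arg_cong[where f="\<lambda>x. c *s x"] sum.cong refl)
           (simp add: matrix_vector_mul_assoc inv_mult SL k)
      also have "(\<Sum>g\<in>G. (k ** g) *v evF F0 (matrix_inv (k ** g) *v v))
          = (\<Sum>g\<in>G. g *v evF F0 (matrix_inv g *v v))"
      proof -
        have inj: "inj_on (\<lambda>g. k ** g) G"
        proof
          fix g h assume "g \<in> G" "h \<in> G" "k ** g = k ** h"
          then have "matrix_inv k ** (k ** g) = matrix_inv k ** (k ** h)" by simp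
          then show "g = h" by (simp add: matrix_mul_assoc inv_props(2)[OF SL[OF k]])
        qed
        have img: "(\<lambda>g. k ** g) ` G = G"
        proof
          show "(\<lambda>g. k ** g) ` G \<subseteq> G" using mulG k by auto
          show "G \<subseteq> (\<lambda>g. k ** g) ` G"
          proof
            fix g assume g: "g \<in> G"
            have "g = k ** (matrix_inv k ** g)"
              by (simp add: matrix_mul_assoc inv_props(1)[OF SL[OF k]])
            then show "g \<in> (\<lambda>g. k ** g) ` G" using mulG invG k g by blast
          qed
        qed
        show ?thesis
          using sum.reindex[OF inj, of "\<lambda>g. g *v evF F0 (matrix_inv g *v v)"] img
          by (simp add: o_def)
      qed
      finally show "evF (act_end k (f1, f2)) v = evF (f1, f2) v" by (simp add: evF12)
    qed
    have "f1 * bY - f2 * bX = P"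
    proof (rule ev_inj)
      fix v
      have "ev (f1 * bY - f2 * bX) v = c * (\<Sum>g\<in>G. D (g *v evF F0 (matrix_inv g *v v)) v)"
        by (simp add: ev_PF evF12 D_smult D_sum)
      also have "\<dots> = c * (\<Sum>g\<in>G. ev P v)"
      proof (intro arg_cong[where f="\<lambda>x. c * x"] sum.cong refl)
        fix g assume g: "g \<in> G"
        have vv: "v = g *v (matrix_inv g *v v)"
          by (simp add: matrix_vector_mul_assoc inv_props(1)[OF SL[OF g]])
        have "D (g *v evF F0 (matrix_inv g *v v)) v
            = D (g *v evF F0 (matrix_inv g *v v)) (g *v (matrix_inv g *v v))"
          using vv by simp
        also have "\<dots> = ev P (matrix_inv g *v v)"
          by (simp add: D_mult SL g PF0)
        also have "\<dots> = ev (act_poly g P) v" by (simp add: act_poly_def ev_lin_comp)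
        also have "\<dots> = ev P v" using H g by simp
        finally show "D (g *v evF F0 (matrix_inv g *v v)) v = ev P v" .
      qed
      also have "\<dots> = ev P v" using n0 by (simp add: c_def n_def[symmetric])
      finally show "ev (f1 * bY - f2 * bX) v = ev P v" .
    qed
    with inv show "\<exists>f1 f2. (\<forall>g\<in>G. act_end g (f1, f2) = (f1, f2)) \<and> f1 * bY - f2 * bX = P"
      by blast
  next
    assume "\<exists>f1 f2. (\<forall>g\<in>G. act_end g (f1, f2) = (f1, f2)) \<and> f1 * bY - f2 * bX = P"
    then obtain f1 f2 where inv: "\<And>g. g \<in> G \<Longrightarrow> act_end g (f1, f2) = (f1, f2)"
      and PP: "f1 * bY - f2 * bX = P" by blast
    have "beval P 0 0 = 0" by (simp add: PP[symmetric])
    moreover have "act_poly g P = P" if g: "g \<in> G" for g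
    proof (rule ev_inj)
      fix v
      define h where "h = matrix_inv g"
      have hG: "h \<in> G" using invG g by (simp add: h_def)
      have e: "evF (f1, f2) v = g *v evF (f1, f2) (h *v v)"
        using evF_act_end[of g "(f1, f2)" v] inv[OF g] by (simp add: h_def)
      have "h *v evF (f1, f2) v = evF (f1, f2) (h *v v)"
        by (subst e) (simp add: matrix_vector_mul_assoc h_def inv_props(2)[OF SL[OF g]])
      then have "ev (act_poly g P) v = D (h *v evF (f1, f2) v) (h *v v)"
        by (simp add: act_poly_def ev_lin_comp h_def PP[symmetric] ev_PF)
      also have "\<dots> = ev P v" by (simp add: D_mult SL hG PP[symmetric] ev_PF)
      finally show "ev (act_poly g P) v = ev P v" .
    qed
    ultimately show "beval P 0 0 = 0 \<and> (\<forall>g\<in>G. act_poly g P = P)" by blast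
  qed
qed

end
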